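(* Let $\mathcal{H}_O\simeq\mathbb{C}^{d_O}$ and $\mathcal{H}_R\simeq\mathbb{C}^{d_R}$. Let $H_R=\sum_{m=1}^{d_R}\lambda_m^{\uparrow}|\xi_m\rangle\langle\xi_m|$ with $\lambda_1^\uparrow\leqslant\dots\leqslant\lambda_{d_R}^\uparrow$ and $\{|\xi_m\rangle\}$ an orthonormal basis of $\mathcal{H}_R$; let $\beta\in(0,\infty)$ and $\rho_R(\beta)=e^{-\beta H_R}/\mathrm{tr}[e^{-\beta H_R}]=\sum_m r_m^{\downarrow}|\xi_m\rangle\langle\xi_m|$. Let $\rho_O=\sum_{l=1}^{d_O}o_l^{\downarrow}|\varphi_l\rangle\langle\varphi_l|$ be a density operator on $\mathcal{H}_O$ with $o_1^\downarrow\geqslant\dots\geqslant o_{d_O}^\downarrow$ and $\{|\varphi_l\rangle\}$ an orthonormal basis. Write $\rho=\rho_O\otimes\rho_R(\beta)=\sum_{n=1}^{d_Od_R}p_n^{\downarrow}|\psi_n\rangle\langle\psi_n|$, where $(p_n^\downarrow)_n$ is the non-increasing rearrangement of $(o_l^\downarrow r_m^\downarrow)_{l,m}$ and $(|\psi_n\rangle)_n$ the correspondingly rearranged family $(|\varphi_l\rangle\otimes|\xi_m\rangle)_{l,m}$. For a unitary $U$ on $\mathcal{H}_O\otimes\mathcal{H}_R$, let $\rho'=U\rho U^\dagger$, $p(\varphi_1|\rho_O')=\langle\varphi_1|\mathrm{tr}_R[\rho']|\varphi_1\rangle$, and $\Delta Q(U)=\mathrm{tr}[H_R(\mathrm{tr}_O[\rho']-\rho_R(\beta))]$;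 let $p_{\varphi_1}^{\max}=\sum_{m=1}^{d_R}p_m^\downarrow$ (the maximum of $p(\varphi_1|\rho_O')$ over all unitaries). Suppose $U_{\mathrm{opt}}(0)$ is a unitary such that (i) $U_{\mathrm{opt}}(0)|\psi_m\rangle=|\varphi_1\rangle\otimes|\xi_m\rangle$ for all $m\in\{1,\dots,d_R\}$, and (ii) for each $m\in\{1,\dots,d_R\}$ there is an orthonormal family $\{|\varphi_l^m\rangle\}_{l=1}^{d_O-1}$ in $\mathcal{H}_O$, each member orthogonal to $|\varphi_1\rangle$, with $U_{\mathrm{opt}}(0)|\psi_{d_R+(m-1)(d_O-1)+l}\rangle=|\varphi_l^m\rangle\otimes|\xi_m\rangle$ for all $l\in\{1,\dots,d_O-1\}$. Then $U_{\mathrm{opt}}(0)$ attains $p(\varphi_1|\rho_O')=p_{\varphi_1}^{\max}$, and $\Delta Q(U_{\mathrm{opt}}(0))\leqslant\Delta Q(V)$ for every unitary $V$ on $\mathcal{H}_O\otimes\mathcal{H}_R$ that also attains $p(\varphi_1|\mathrm{tr}_R[V\rho V^\dagger])=p_{\varphi_1}^{\max}$.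
   Context: $\mathrm{tr}_O,\mathrm{tr}_R$ denote partial traces over $\mathcal{H}_O$ and $\mathcal{H}_R$. In the paper the rules (i),(ii) are phrased by partitioning $(p_n^\downarrow)$ into the block $\Pi_0=(p_1^\downarrow,\dots,p_{d_R}^\downarrow)$ and blocks $\Pi_m=(p^\downarrow_{d_R+(m-1)(d_O-1)+l})_{l=1}^{d_O-1}$, $m\geqslant1$. *)

theory Defs
  imports "HOL-Analysis.Analysis"
begin

text \<open>Finite-dimensional quantum mechanics with type-indexed dimensions:
  H_O = complex^'o, H_R = complex^'r, H_O (x) H_R = complex^('o \<times> 'r).\<close>

definition cinner_vec :: "complex^'n \<Rightarrow> complex^'n \<Rightarrow> complex" where
  "cinner_vec x y = (\<Sum>i\<in>UNIV. cnj (x$i) * y$i)"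

definition ketbra :: "complex^'n \<Rightarrow> complex^'m \<Rightarrow> complex^'m^'n" where
  "ketbra x y = (\<chi> i j. x$i * cnj (y$j))"

definition orthonormal_on :: "nat set \<Rightarrow> (nat \<Rightarrow> complex^'n) \<Rightarrow> bool" where
  "orthonormal_on I f \<longleftrightarrow>
     (\<forall>i\<in>I. \<forall>j\<in>I. cinner_vec (f i) (f j) = (if i = j then 1 else 0))"

definition adj :: "complex^'n^'m \<Rightarrow> complex^'m^'n" where
  "adj A = (\<chi> i j. cnj (A$j$i))"

definition unitary_mat :: "complex^'n^'n \<Rightarrow> bool" where
  "unitary_mat U \<longleftrightarrow> adj U ** U = mat 1 \<and> U ** adj U = mat 1"

definition smat :: "complex \<Rightarrow> complex^'n^'m \<Rightarrow> complex^'n^'m" where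
  "smat c A = (\<chi> i j. c * A$i$j)"

definition tensor_vec :: "complex^'a \<Rightarrow> complex^'b \<Rightarrow> complex^('a::finite \<times> 'b::finite)" where
  "tensor_vec x y = (\<chi> ij. x$(fst ij) * y$(snd ij))"

definition tensor_mat :: "complex^'a^'a \<Rightarrow> complex^'b^'b \<Rightarrow> complex^('a::finite \<times> 'b::finite)^('a \<times> 'b)" where
  "tensor_mat A B = (\<chi> ij kl. A$(fst ij)$(fst kl) * B$(snd ij)$(snd kl))"

definition ptrace_R :: "complex^('a::finite \<times> 'b::finite)^('a \<times> 'b) \<Rightarrow> complex^'a^'a" where
  "ptrace_R A = (\<chi> i j. \<Sum>k\<in>UNIV. A$(i,k)$(j,k))"

definition ptrace_O :: "complex^('a::finite \<times> 'b::finite)^('a \<times> 'b) \<Rightarrow> complex^'b^'b" where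
  "ptrace_O A = (\<chi> i j. \<Sum>k\<in>UNIV. A$(k,i)$(k,j))"

fun mpow :: "complex^'n^'n \<Rightarrow> nat \<Rightarrow> complex^'n^'n" where
  "mpow A 0 = mat 1"
| "mpow A (Suc k) = A ** mpow A k"

definition mexp :: "complex^'n^'n \<Rightarrow> complex^'n^'n" where
  "mexp A = (\<Sum>k. (1 / fact k) *\<^sub>R mpow A k)"

definition gibbs :: "real \<Rightarrow> complex^'n^'n \<Rightarrow> complex^'n^'n" where
  "gibbs \<beta> H = smat (inverse (trace (mexp ((- \<beta>) *\<^sub>R H)))) (mexp ((- \<beta>) *\<^sub>R H))"

end

theory Submission
  imports Defs
begin



lemma sum_UNIV_prod: "(\<Sum>x\<in>(UNIV::('a::finite\<times>'b::finite) set). f x) = (\<Sum>a\<in>UNIV. \<Sum>b\<in>UNIV. f (a,b))"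
  by (simp add: sum.cartesian_product)

lemma cinner_adj: "cinner_vec (A *v x) y = cinner_vec x (adj A *v y)"
  unfolding cinner_vec_def matrix_vector_mult_def adj_def
  apply (simp add: sum_distrib_left sum_distrib_right)
  apply (subst sum.swap)
  apply (simp add: mult_ac)
  done

lemma cinner_tensor: "cinner_vec (tensor_vec a b) (tensor_vec c d) = cinner_vec a c * cinner_vec b d"
  unfolding cinner_vec_def tensor_vec_def
  by (simp add: sum_UNIV_prod sum_product mult_ac)

lemma tensor_mat_vec: "tensor_mat A B *v tensor_vec x y = tensor_vec (A *v x) (B *v y)"
  unfolding tensor_mat_def tensor_vec_def matrix_vector_mult_def
  by (simp add: vec_eq_iff sum_UNIV_prod sum_product mult_ac)

lemma ketbra_vec: "ketbra x y *v z = cinner_vec y z *s x"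
  unfolding ketbra_def matrix_vector_mult_def cinner_vec_def
  by (simp add: vec_eq_iff sum_distrib_left mult_ac)

lemma smat_vec: "smat c A *v z = c *s (A *v z)"
  unfolding smat_def matrix_vector_mult_def
  by (simp add: vec_eq_iff sum_distrib_left mult_ac)

lemma sum_mat_vec: "finite S \<Longrightarrow> (\<Sum>m\<in>S. A m) *v z = (\<Sum>m\<in>S. A m *v z)"
  by (induction S rule: finite_induct) (auto simp: matrix_vector_mult_add_rdistrib)




lemma mult_ite01[simp]: "(c::complex) * (if P then 1 else 0) = (if P then c else 0)" by simp

definition complete_on :: "nat set \<Rightarrow> (nat \<Rightarrow> complex^'n) \<Rightarrow> bool" where
  "complete_on I f \<longleftrightarrow> (\<forall>a b. (\<Sum>i\<in>I. f i $ a * cnj (f i $ b)) = (if a = b then 1 else 0))"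

lemma ortho_complete:
  fixes f :: "nat \<Rightarrow> complex^'n"
  assumes fin: "finite I" and card: "card I = CARD('n)" and on: "orthonormal_on I f"
  shows "complete_on I f"
proof -
  obtain g where g: "bij_betw g (UNIV::'n set) I"
    using finite_same_card_bij[of "UNIV::'n set" I] fin card by auto
  define F :: "complex^'n^'n" where "F = (\<chi> a c. f (g c) $ a)"
  have "adj F ** F = mat 1"
  proof -
    have "(adj F ** F) $ c $ c' = (if c = c' then 1 else 0)" for c c'
    proof -
      have "(adj F ** F) $ c $ c' = cinner_vec (f (g c)) (f (g c'))"
        by (simp add: F_def adj_def matrix_matrix_mult_def cinner_vec_def)
      also have "\<dots> = (if g c = g c' then 1 else 0)"
        using on bij_betw_apply[OF g, of c] bij_betw_apply[OF g, of c'] unfolding orthonormal_on_def by blast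
      also have "\<dots> = (if c = c' then 1 else 0)"
        using bij_betw_imp_inj_on[OF g] unfolding inj_on_def by auto
      finally show ?thesis .
    qed
    then show ?thesis by (simp add: vec_eq_iff mat_def)
  qed
  then have FF: "F ** adj F = mat 1" using matrix_left_right_inverse by blast
  show ?thesis unfolding complete_on_def
  proof (intro allI)
    fix a b :: 'n
    have "(\<Sum>i\<in>I. f i $ a * cnj (f i $ b)) = (\<Sum>c\<in>UNIV. f (g c) $ a * cnj (f (g c) $ b))"
      using sum.reindex_bij_betw[OF g, of "\<lambda>i. f i $ a * cnj (f i $ b)"] by simp
    also have "\<dots> = (F ** adj F) $ a $ b"
      by (simp add: F_def adj_def matrix_matrix_mult_def)
    finally show "(\<Sum>i\<in>I. f i $ a * cnj (f i $ b)) = (if a = b then 1 else 0)"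
      using FF by (simp add: mat_def)
  qed
qed

lemma parseval:
  assumes "complete_on I f" "finite I"
  shows "(\<Sum>i\<in>I. cinner_vec x (f i) * cinner_vec (f i) y) = cinner_vec x y"
proof -
  have "(\<Sum>i\<in>I. cinner_vec x (f i) * cinner_vec (f i) y)
     = (\<Sum>a\<in>UNIV. \<Sum>b\<in>UNIV. cnj (x$a) * y$b * (\<Sum>i\<in>I. f i $ a * cnj (f i $ b)))"
    unfolding cinner_vec_def
    by (simp add: sum_product sum_distrib_left mult_ac sum.swap[of _ I])
  also have "\<dots> = (\<Sum>a\<in>UNIV. \<Sum>b\<in>UNIV. if a = b then cnj (x$a) * y$b else 0)"
    using assms(1) unfolding complete_on_def by (simp cong: if_cong)
  also have "\<dots> = cinner_vec x y" by (simp add: cinner_vec_def)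
  finally show ?thesis .
qed

lemma complete_unitary:
  assumes "complete_on I f" "finite I" "V ** adj V = mat 1"
  shows "complete_on I (\<lambda>i. V *v f i)"
  unfolding complete_on_def
proof (intro allI)
  fix a b
  have "(\<Sum>i\<in>I. (V *v f i) $ a * cnj ((V *v f i) $ b))
      = (\<Sum>d\<in>UNIV. \<Sum>c\<in>UNIV. V$a$c * cnj (V$b$d) * (\<Sum>i\<in>I. f i $ c * cnj (f i $ d)))"
    by (simp add: matrix_vector_mult_def sum_product sum_distrib_left mult_ac sum.swap[of _ I])
  also have "\<dots> = (\<Sum>d\<in>UNIV. \<Sum>c\<in>UNIV. if c = d then V$a$c * cnj (V$b$d) else 0)"
    using assms(1) unfolding complete_on_def by (simp cong: if_cong)
  also have "\<dots> = (V ** adj V) $ a $ b" by (simp add: matrix_matrix_mult_def adj_def)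
  finally show "(\<Sum>i\<in>I. (V *v f i) $ a * cnj ((V *v f i) $ b)) = (if a = b then 1 else 0)"
    using assms(3) by (simp add: mat_def)
qed

lemma cinner_unitary:
  assumes "adj V ** V = mat 1"
  shows "cinner_vec (V *v x) (V *v y) = cinner_vec x y"
  by (simp add: cinner_adj matrix_vector_mul_assoc assms)

lemma spectral_expand:
  assumes "complete_on K u" "finite K" "\<And>k. k \<in> K \<Longrightarrow> W *v u k = s k *s u k"
  shows "cinner_vec v (W *v v) = (\<Sum>k\<in>K. s k * cinner_vec v (u k) * cinner_vec (u k) v)"
proof -
  have Wab: "W $ a $ b = (\<Sum>k\<in>K. s k * u k $ a * cnj (u k $ b))" for a b
  proof -
    have "W $ a $ b = (\<Sum>c\<in>UNIV. W$a$c * (if c = b then 1 else 0))" by simp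
    also have "\<dots> = (\<Sum>c\<in>UNIV. W$a$c * (\<Sum>k\<in>K. u k $ c * cnj (u k $ b)))"
      using assms(1) unfolding complete_on_def by simp
    also have "\<dots> = (\<Sum>k\<in>K. (W *v u k) $ a * cnj (u k $ b))"
      by (simp add: matrix_vector_mult_def sum_distrib_left sum_distrib_right mult_ac sum.swap[of _ K])
    also have "\<dots> = (\<Sum>k\<in>K. s k * u k $ a * cnj (u k $ b))"
      using assms(3) by (simp add: mult_ac)
    finally show ?thesis .
  qed
  have "cinner_vec v (W *v v) = (\<Sum>a\<in>UNIV. \<Sum>b\<in>UNIV. \<Sum>k\<in>K. s k * (cnj (v$a) * u k $ a) * (cnj (u k $ b) * v$b))"
    by (simp add: cinner_vec_def matrix_vector_mult_def Wab sum_distrib_left sum_distrib_right mult_ac)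
  also have "\<dots> = (\<Sum>k\<in>K. \<Sum>a\<in>UNIV. \<Sum>b\<in>UNIV. s k * (cnj (v$a) * u k $ a) * (cnj (u k $ b) * v$b))"
    by (simp only: sum.swap[of _ K])
  also have "\<dots> = (\<Sum>k\<in>K. s k * (cinner_vec v (u k) * cinner_vec (u k) v))"
    unfolding cinner_vec_def by (simp add: sum_distrib_left sum_distrib_right mult_ac)
  also have "\<dots> = (\<Sum>k\<in>K. s k * cinner_vec v (u k) * cinner_vec (u k) v)"
    by (simp add: mult.assoc)
  finally show ?thesis .
qed




lemma abel_ineq:
  fixes p h :: "nat \<Rightarrow> real"
  assumes "\<And>n. 1 \<le> n \<Longrightarrow> n < j \<Longrightarrow> p (Suc n) \<le> p n"
    and "\<And>i. i \<le> j \<Longrightarrow> 0 \<le> (\<Sum>n\<in>{1..i}. h n)"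
  shows "(\<Sum>n\<in>{1..j}. p n * h n) \<ge> p j * (\<Sum>n\<in>{1..j}. h n)"
  using assms
proof (induction j)
  case 0
  then show ?case by simp
next
  case (Suc j)
  have IH: "(\<Sum>n\<in>{1..j}. p n * h n) \<ge> p j * (\<Sum>n\<in>{1..j}. h n)"
    using Suc.prems by (intro Suc.IH) auto
  have H: "0 \<le> (\<Sum>n\<in>{1..j}. h n)" using Suc.prems(2)[of j] by simp
  have "p j * (\<Sum>n\<in>{1..j}. h n) \<ge> p (Suc j) * (\<Sum>n\<in>{1..j}. h n)"
  proof (cases "j = 0")
    case True then show ?thesis by simp
  next
    case False
    then have "p (Suc j) \<le> p j" using Suc.prems(1)[of j] by simp
    then show ?thesis using H by (simp add: mult_right_mono)
  qed
  then show ?case using IH by (simp add: sum.cl_ivl_Suc algebra_simps)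
qed

lemma rearrangement:
  fixes p s :: "nat \<Rightarrow> real" and D :: "nat \<Rightarrow> nat \<Rightarrow> real"
  assumes pmono: "\<And>n n'. n \<in> {1..N} \<Longrightarrow> n' \<in> {1..N} \<Longrightarrow> n \<le> n' \<Longrightarrow> p n' \<le> p n"
    and smono: "\<And>n n'. n \<in> {1..N} \<Longrightarrow> n' \<in> {1..N} \<Longrightarrow> n \<le> n' \<Longrightarrow> s n \<le> s n'"
    and Dnn: "\<And>n k. n \<in> {1..N} \<Longrightarrow> k \<in> {1..N} \<Longrightarrow> 0 \<le> D n k"
    and row: "\<And>n. n \<in> {1..N} \<Longrightarrow> (\<Sum>k\<in>{1..N}. D n k) = 1"
    and col: "\<And>k. k \<in> {1..N} \<Longrightarrow> (\<Sum>n\<in>{1..N}. D n k) = 1"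
  shows "(\<Sum>n\<in>{1..N}. p n * (\<Sum>k\<in>{1..N}. D n k * s k)) \<ge> (\<Sum>n\<in>{1..N}. p n * s n)"
proof -
  define h where "h n = (\<Sum>k\<in>{1..N}. D n k * s k) - s n" for n
  have Hj: "0 \<le> (\<Sum>n\<in>{1..j}. h n)" if jN: "j \<le> N" for j
  proof (cases "j = 0")
    case True then show ?thesis by simp
  next
    case False
    define c where "c k = (\<Sum>n\<in>{1..j}. D n k)" for k
    have sub: "{1..j} \<subseteq> {1..N}" using jN by auto
    have c1: "c k \<le> 1" if "k \<in> {1..N}" for k
    proof -
      have "c k \<le> (\<Sum>n\<in>{1..N}. D n k)" unfolding c_def
        using sub Dnn that by (intro sum_mono2) auto
      then show ?thesis using col that by simp
    qed
    have c0: "0 \<le> c k" if "k \<in> {1..N}" for k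
      unfolding c_def using sub Dnn that by (intro sum_nonneg) auto
    have sumc: "(\<Sum>k\<in>{1..N}. c k) = real j"
    proof -
      have "(\<Sum>k\<in>{1..N}. c k) = (\<Sum>n\<in>{1..j}. \<Sum>k\<in>{1..N}. D n k)"
        unfolding c_def by (rule sum.swap)
      also have "\<dots> = (\<Sum>n\<in>{1..j}. 1)" using row sub by (intro sum.cong) auto
      finally show ?thesis by simp
    qed
    define e where "e k = (if k \<le> j then 1 else 0::real)" for k
    have sume: "(\<Sum>k\<in>{1..N}. e k) = real j"
    proof -
      have "{1..N} \<inter> {k. k \<le> j} = {1..j}" using jN by auto
      then show ?thesis unfolding e_def by (simp add: sum.If_cases)
    qed
    have sumes: "(\<Sum>k\<in>{1..N}. e k * s k) = (\<Sum>n\<in>{1..j}. s n)"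
    proof -
      have "{1..N} \<inter> {k. k \<le> j} = {1..j}" using jN by auto
      moreover have "(if k \<le> j then 1 else 0) * s k = (if k \<le> j then s k else 0)" for k by simp
      ultimately show ?thesis unfolding e_def by (simp add: sum.If_cases)
    qed
    have "(\<Sum>n\<in>{1..j}. h n) = (\<Sum>k\<in>{1..N}. (c k - e k) * s k)"
    proof -
      have "(\<Sum>n\<in>{1..j}. h n) = (\<Sum>n\<in>{1..j}. \<Sum>k\<in>{1..N}. D n k * s k) - (\<Sum>n\<in>{1..j}. s n)"
        unfolding h_def by (simp add: sum_subtractf)
      also have "(\<Sum>n\<in>{1..j}. \<Sum>k\<in>{1..N}. D n k * s k) = (\<Sum>k\<in>{1..N}. c k * s k)"
        unfolding c_def sum_distrib_right by (rule sum.swap)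
      finally show ?thesis using sumes by (simp add: algebra_simps sum_subtractf)
    qed
    also have "\<dots> = (\<Sum>k\<in>{1..N}. (c k - e k) * (s k - s j))"
    proof -
      have "(\<Sum>k\<in>{1..N}. (c k - e k) * (s k - s j)) = (\<Sum>k\<in>{1..N}. (c k - e k) * s k) - (\<Sum>k\<in>{1..N}. (c k - e k) * s j)"
        unfolding right_diff_distrib[of "c _ - e _"] by (rule sum_subtractf)
      also have "(\<Sum>k\<in>{1..N}. (c k - e k) * s j) = (\<Sum>k\<in>{1..N}. (c k - e k)) * s j"
        by (rule sum_distrib_right[symmetric])
      also have "(\<Sum>k\<in>{1..N}. (c k - e k)) = 0" using sumc sume by (simp add: sum_subtractf)
      finally show ?thesis by simp
    qed
    also have "\<dots> \<ge> 0"
    proof (intro sum_nonneg)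
      fix k assume k: "k \<in> {1..N}"
      have j1: "j \<in> {1..N}" using False jN by auto
      show "0 \<le> (c k - e k) * (s k - s j)"
      proof (cases "k \<le> j")
        case True
        then have "c k - e k \<le> 0" "s k - s j \<le> 0" using c1[OF k] smono[OF k j1] by (auto simp: e_def)
        then show ?thesis by (simp add: mult_nonpos_nonpos)
      next
        case False
        then have "c k - e k \<ge> 0" "s k - s j \<ge> 0" using c0[OF k] smono[OF j1 k] by (auto simp: e_def)
        then show ?thesis by simp
      qed
    qed
    finally show ?thesis .
  qed
  have HN: "(\<Sum>n\<in>{1..N}. h n) = 0"
  proof -
    have "(\<Sum>n\<in>{1..N}. \<Sum>k\<in>{1..N}. D n k * s k) = (\<Sum>k\<in>{1..N}. (\<Sum>n\<in>{1..N}. D n k) * s k)"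
      unfolding sum_distrib_right by (rule sum.swap)
    also have "\<dots> = (\<Sum>k\<in>{1..N}. s k)" using col by simp
    finally show ?thesis unfolding h_def by (simp add: sum_subtractf)
  qed
  have "(\<Sum>n\<in>{1..N}. p n * h n) \<ge> p N * (\<Sum>n\<in>{1..N}. h n)"
  proof (rule abel_ineq)
    show "\<And>n. 1 \<le> n \<Longrightarrow> n < N \<Longrightarrow> p (Suc n) \<le> p n" by (rule pmono) auto
    show "\<And>i. i \<le> N \<Longrightarrow> 0 \<le> (\<Sum>n\<in>{1..i}. h n)" by (rule Hj)
  qed
  then have "(\<Sum>n\<in>{1..N}. p n * h n) \<ge> 0" using HN by simp
  then show ?thesis unfolding h_def by (simp add: algebra_simps sum_subtractf)
qed




lemma trace_ketbra: "trace (B ** ketbra x x) = cinner_vec x (B *v x)"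
  unfolding trace_def ketbra_def cinner_vec_def matrix_matrix_mult_def matrix_vector_mult_def
  by (simp add: sum_distrib_left mult_ac)

lemma trace_smat: "trace (B ** smat c K) = c * trace (B ** K)"
  unfolding trace_def smat_def matrix_matrix_mult_def
  by (simp add: sum_distrib_left mult_ac)

lemma trace_sum: "finite S \<Longrightarrow> trace (B ** (\<Sum>n\<in>S. A n)) = (\<Sum>n\<in>S. trace (B ** A n))"
  by (induction S rule: finite_induct) (auto simp: matrix_add_ldistrib trace_add trace_def sum.distrib)

lemma trace_rho:
  assumes "finite S"
  shows "trace (B ** (\<Sum>n\<in>S. smat (c n) (ketbra (x n) (x n)))) = (\<Sum>n\<in>S. c n * cinner_vec (x n) (B *v x n))"
  using assms by (simp add: trace_sum trace_smat trace_ketbra)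

lemma conj_trace:
  fixes X V R :: "complex^'n^'n"
  shows "trace (X ** (V ** R ** adj V)) = trace ((adj V ** X ** V) ** R)"
proof -
  have "trace (X ** (V ** R ** adj V)) = trace (((X ** V) ** R) ** adj V)"
    by (simp add: matrix_mul_assoc)
  also have "\<dots> = trace (adj V ** ((X ** V) ** R))" by (rule trace_mul_sym)
  also have "\<dots> = trace ((adj V ** X ** V) ** R)" by (simp add: matrix_mul_assoc)
  finally show ?thesis .
qed

lemma cinner_conj: "cinner_vec y ((adj V ** X ** V) *v y) = cinner_vec (V *v y) (X *v (V *v y))"
  by (simp add: cinner_adj matrix_vector_mul_assoc[symmetric])

lemma ite_mult1: "(if P then (1::complex) else 0) * c = (if P then c else 0)" by simp
lemma ite_multL: "(if P then (c::complex) else 0) * d = (if P then c * d else 0)" by simp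
lemma ite_multR: "(d::complex) * (if P then c else 0) = (if P then d * c else 0)" by simp

lemma sum_if_const: "(\<Sum>x\<in>S. if P then g x else (0::complex)) = (if P then (\<Sum>x\<in>S. g x) else 0)"
  by (cases P) auto

lemma sum_swap3: "(\<Sum>i\<in>A. \<Sum>k\<in>B. \<Sum>n\<in>C. f i k n) = (\<Sum>n\<in>C. \<Sum>i\<in>A. \<Sum>k\<in>B. f i k n)"
proof -
  have "(\<Sum>i\<in>A. \<Sum>k\<in>B. \<Sum>n\<in>C. f i k n) = (\<Sum>i\<in>A. \<Sum>n\<in>C. \<Sum>k\<in>B. f i k n)"
    by (rule sum.cong[OF refl]) (rule sum.swap)
  also have "\<dots> = (\<Sum>n\<in>C. \<Sum>i\<in>A. \<Sum>k\<in>B. f i k n)" by (rule sum.swap)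
  finally show ?thesis .
qed

lemma pphi_trace: "cinner_vec \<phi> (ptrace_R A *v \<phi>) = trace (tensor_mat (ketbra \<phi> \<phi>) (mat 1) ** A)"
proof -
  have L: "cinner_vec \<phi> (ptrace_R A *v \<phi>) = (\<Sum>i\<in>UNIV. \<Sum>n\<in>UNIV. \<Sum>k\<in>UNIV. cnj (\<phi>$i) * (A$(i,k)$(n,k) * \<phi>$n))"
    unfolding cinner_vec_def ptrace_R_def matrix_vector_mult_def
    by (simp add: sum_distrib_left sum_distrib_right mult_ac)
  have R: "trace (tensor_mat (ketbra \<phi> \<phi>) (mat 1) ** A) = (\<Sum>a\<in>UNIV. \<Sum>b\<in>UNIV. \<Sum>c\<in>UNIV. \<phi>$a * cnj (\<phi>$c) * A$(c,b)$(a,b))"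
    unfolding trace_def tensor_mat_def ketbra_def matrix_matrix_mult_def
    by (simp add: sum_UNIV_prod mat_def ite_mult1 ite_multL ite_multR)
  show ?thesis unfolding L R
    by (subst sum_swap3[symmetric]) (simp add: mult_ac)
qed

lemma dq_trace: "trace (H ** ptrace_O A) = trace (tensor_mat (mat 1) H ** A)"
proof -
  have L: "trace (H ** ptrace_O A) = (\<Sum>i\<in>UNIV. \<Sum>k\<in>UNIV. \<Sum>n\<in>UNIV. H $ i $ k * A $ (n, k) $ (n, i))"
    unfolding ptrace_O_def trace_def matrix_matrix_mult_def
    by (simp add: sum_distrib_left)
  have R: "trace (tensor_mat (mat 1) H ** A) = (\<Sum>a\<in>UNIV. \<Sum>b\<in>UNIV. \<Sum>d\<in>UNIV. H$b$d * A$(a,d)$(a,b))"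
    unfolding trace_def tensor_mat_def matrix_matrix_mult_def
    by (simp add: sum_UNIV_prod mat_def ite_mult1 ite_multL ite_multR sum_if_const)
  show ?thesis unfolding L R by (rule sum_swap3)
qed

lemma tensor_spec:
  fixes x :: "nat \<Rightarrow> complex^'a::finite" and y :: "nat \<Rightarrow> complex^'b::finite"
  assumes sig: "bij_betw \<sigma> S (A \<times> B)" and fin: "finite A" "finite B"
    and pe: "\<And>n. n \<in> S \<Longrightarrow> p n = a (fst (\<sigma> n)) * b (snd (\<sigma> n))"
    and psie: "\<And>n. n \<in> S \<Longrightarrow> \<psi> n = tensor_vec (x (fst (\<sigma> n))) (y (snd (\<sigma> n)))"
  shows "tensor_mat (\<Sum>l\<in>A. smat (complex_of_real (a l)) (ketbra (x l) (x l)))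
            (\<Sum>m\<in>B. smat (complex_of_real (b m)) (ketbra (y m) (y m)))
       = (\<Sum>n\<in>S. smat (complex_of_real (p n)) (ketbra (\<psi> n) (\<psi> n)))"
proof -
  define f where "f lm = smat (complex_of_real (a (fst lm) * b (snd lm)))
     (ketbra (tensor_vec (x (fst lm)) (y (snd lm))) (tensor_vec (x (fst lm)) (y (snd lm))))" for lm
  have "(\<Sum>n\<in>S. smat (complex_of_real (p n)) (ketbra (\<psi> n) (\<psi> n))) = (\<Sum>n\<in>S. f (\<sigma> n))"
    using pe psie by (intro sum.cong) (auto simp: f_def)
  also have "\<dots> = (\<Sum>lm\<in>A \<times> B. f lm)" by (rule sum.reindex_bij_betw[OF sig])
  also have "\<dots> = (\<Sum>l\<in>A. \<Sum>m\<in>B. f (l, m))" by (simp add: sum.cartesian_product)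
  finally have R: "(\<Sum>n\<in>S. smat (complex_of_real (p n)) (ketbra (\<psi> n) (\<psi> n))) = (\<Sum>l\<in>A. \<Sum>m\<in>B. f (l, m))" .
  show ?thesis unfolding R
    by (simp add: vec_eq_iff sum_component tensor_mat_def f_def smat_def ketbra_def tensor_vec_def
        sum_product mult_ac)
qed




lemma matrix_sub_ldistrib: "(A::complex^'n^'m) ** (B - C) = A ** B - A ** C"
  by (simp add: matrix_matrix_mult_def vec_eq_iff sum_subtractf right_diff_distrib)

lemma cinner_sym: "cinner_vec x y = cnj (cinner_vec y x)"
  unfolding cinner_vec_def by (simp add: mult.commute)

lemma cinner_sq: "cinner_vec x y * cinner_vec y x = complex_of_real ((cmod (cinner_vec y x))^2)"
  by (metis cinner_sym complex_norm_square mult.commute)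

lemma cinner_sq': "cinner_vec x y * cinner_vec y x = complex_of_real ((cmod (cinner_vec x y))^2)"
  by (metis cinner_sq mult.commute)

lemma tensor_vec_scale: "tensor_vec x (c *s y) = c *s tensor_vec x y"
  unfolding tensor_vec_def by (simp add: vec_eq_iff mult_ac)

lemma tensor_vec_scale1: "tensor_vec (c *s x) y = c *s tensor_vec x y"
  unfolding tensor_vec_def by (simp add: vec_eq_iff mult_ac)

lemma cinner_scale_right: "cinner_vec x (c *s y) = c * cinner_vec x y"
  unfolding cinner_vec_def by (simp add: sum_distrib_left mult_ac)

lemma spec_apply:
  assumes "orthonormal_on S \<xi>" "finite S" "n \<in> S"
  shows "(\<Sum>m\<in>S. smat (complex_of_real (lam m)) (ketbra (\<xi> m) (\<xi> m))) *v \<xi> n = complex_of_real (lam n) *s \<xi> n"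
proof -
  have "(\<Sum>m\<in>S. smat (complex_of_real (lam m)) (ketbra (\<xi> m) (\<xi> m))) *v \<xi> n
      = (\<Sum>m\<in>S. complex_of_real (lam m) *s (cinner_vec (\<xi> m) (\<xi> n) *s \<xi> m))"
    using assms(2) by (simp add: sum_mat_vec smat_vec ketbra_vec)
  also have "\<dots> = (\<Sum>m\<in>S. if m = n then complex_of_real (lam m) *s \<xi> m else 0)"
    using assms(1,3) unfolding orthonormal_on_def by (intro sum.cong) auto
  also have "\<dots> = complex_of_real (lam n) *s \<xi> n" using assms(2,3) by simp
  finally show ?thesis .
qed

lemma tensor_vec_zero: "tensor_vec 0 y = 0"
  unfolding tensor_vec_def by (simp add: vec_eq_iff)




theorem theorem2:
  fixes \<xi> :: "nat \<Rightarrow> complex^'r"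
    and \<phi> :: "nat \<Rightarrow> complex^'o"
    and lam r ow p :: "nat \<Rightarrow> real"
    and HR :: "complex^'r^'r"
    and rhoO :: "complex^'o^'o"
    and \<beta> :: real
    and \<sigma> :: "nat \<Rightarrow> nat \<times> nat"
    and \<psi> :: "nat \<Rightarrow> complex^('o \<times> 'r)"
    and U :: "complex^('o \<times> 'r)^('o \<times> 'r)"
  defines "dO \<equiv> CARD('o)" and "dR \<equiv> CARD('r)"
  defines "rho \<equiv> tensor_mat rhoO (gibbs \<beta> HR)"
  defines "pphi \<equiv> (\<lambda>W. cinner_vec (\<phi> 1) (ptrace_R (W ** rho ** adj W) *v \<phi> 1))"
  defines "DeltaQ \<equiv> (\<lambda>W. trace (HR ** (ptrace_O (W ** rho ** adj W) - gibbs \<beta> HR)))"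
  defines "pmax \<equiv> (\<Sum>m\<in>{1..dR}. p m)"
  assumes xi_onb: "orthonormal_on {1..dR} \<xi>"
    and HR_eq: "HR = (\<Sum>m\<in>{1..dR}. smat (complex_of_real (lam m)) (ketbra (\<xi> m) (\<xi> m)))"
    and lam_mono: "\<And>m m'. m \<in> {1..dR} \<Longrightarrow> m' \<in> {1..dR} \<Longrightarrow> m \<le> m' \<Longrightarrow> lam m \<le> lam m'"
    and beta_pos: "\<beta> > 0"
    and rhoR_eq: "gibbs \<beta> HR = (\<Sum>m\<in>{1..dR}. smat (complex_of_real (r m)) (ketbra (\<xi> m) (\<xi> m)))"
    and phi_onb: "orthonormal_on {1..dO} \<phi>"
    and rhoO_eq: "rhoO = (\<Sum>l\<in>{1..dO}. smat (complex_of_real (ow l)) (ketbra (\<phi> l) (\<phi> l)))"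
    and o_nonneg: "\<And>l. l \<in> {1..dO} \<Longrightarrow> ow l \<ge> 0"
    and o_sum: "(\<Sum>l\<in>{1..dO}. ow l) = 1"
    and o_mono: "\<And>l l'. l \<in> {1..dO} \<Longrightarrow> l' \<in> {1..dO} \<Longrightarrow> l \<le> l' \<Longrightarrow> ow l' \<le> ow l"
    and sigma_bij: "bij_betw \<sigma> {1..dO * dR} ({1..dO} \<times> {1..dR})"
    and p_eq: "\<And>n. n \<in> {1..dO * dR} \<Longrightarrow> p n = ow (fst (\<sigma> n)) * r (snd (\<sigma> n))"
    and p_mono: "\<And>n n'. n \<in> {1..dO * dR} \<Longrightarrow> n' \<in> {1..dO * dR} \<Longrightarrow> n \<le> n' \<Longrightarrow> p n' \<le> p n"
    and psi_eq: "\<And>n. n \<in> {1..dO * dR} \<Longrightarrow> \<psi> n = tensor_vec (\<phi> (fst (\<sigma> n))) (\<xi> (snd (\<sigma> n)))"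
    and U_unitary: "unitary_mat U"
    and U_i: "\<And>m. m \<in> {1..dR} \<Longrightarrow> U *v \<psi> m = tensor_vec (\<phi> 1) (\<xi> m)"
    and U_ii: "\<And>m. m \<in> {1..dR} \<Longrightarrow>
       \<exists>\<chi>m :: nat \<Rightarrow> complex^'o.
          orthonormal_on {1..dO - 1} \<chi>m \<and>
          (\<forall>l\<in>{1..dO - 1}. cinner_vec (\<phi> 1) (\<chi>m l) = 0) \<and>
          (\<forall>l\<in>{1..dO - 1}. U *v \<psi> (dR + (m - 1) * (dO - 1) + l) = tensor_vec (\<chi>m l) (\<xi> m))"
  shows "pphi U = complex_of_real pmax \<and>
         (\<forall>V. unitary_mat V \<and> pphi V = complex_of_real pmax \<longrightarrow>
              Re (DeltaQ U) \<le> Re (DeltaQ V))"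
proof -
  define N where "N = dO * dR"
  have dO1: "dO \<ge> 1" unfolding dO_def using card_gt_0_iff[of "UNIV::'o set"] by simp
  have dR1: "dR \<ge> 1" unfolding dR_def using card_gt_0_iff[of "UNIV::'r set"] by simp
  have cardN: "card {1..N} = CARD('o \<times> 'r)"
    using card_cartesian_product[of "UNIV::'o set" "UNIV::'r set"] by (simp add: N_def dO_def dR_def)
  have dRN: "dR \<le> N" using dO1 by (simp add: N_def)
  have one_O: "1 \<in> {1..dO}" using dO1 by simp
  have phi1: "cinner_vec (\<phi> 1) (\<phi> 1) = 1" using phi_onb one_O unfolding orthonormal_on_def by auto
  have psi_on: "orthonormal_on {1..N} \<psi>"
    unfolding orthonormal_on_def
  proof (intro ballI)
    fix n n' assume n: "n \<in> {1..N}" and n': "n' \<in> {1..N}"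
    have s1: "\<sigma> n \<in> {1..dO} \<times> {1..dR}" "\<sigma> n' \<in> {1..dO} \<times> {1..dR}"
      using bij_betw_apply[OF sigma_bij] n n' by (auto simp: N_def)
    have inj: "\<sigma> n = \<sigma> n' \<longleftrightarrow> n = n'"
      using bij_betw_imp_inj_on[OF sigma_bij] n n' unfolding inj_on_def N_def by blast
    have "cinner_vec (\<psi> n) (\<psi> n') = cinner_vec (\<phi> (fst (\<sigma> n))) (\<phi> (fst (\<sigma> n'))) * cinner_vec (\<xi> (snd (\<sigma> n))) (\<xi> (snd (\<sigma> n')))"
      using psi_eq n n' by (simp add: N_def cinner_tensor)
    also have "\<dots> = (if \<sigma> n = \<sigma> n' then 1 else 0)"
      using phi_onb xi_onb s1 unfolding orthonormal_on_def by (auto simp: prod_eq_iff mem_Times_iff)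
    finally show "cinner_vec (\<psi> n) (\<psi> n') = (if n = n' then 1 else 0)" using inj by simp
  qed
  have psi_c: "complete_on {1..N} \<psi>" using ortho_complete[OF _ cardN psi_on] by simp
  have rho_eq: "rho = (\<Sum>n\<in>{1..N}. smat (complex_of_real (p n)) (ketbra (\<psi> n) (\<psi> n)))"
    unfolding rho_def rhoR_eq rhoO_eq N_def
    by (rule tensor_spec[OF sigma_bij]) (auto intro: p_eq psi_eq)
  have tr_gen: "trace (X ** (V ** rho ** adj V)) = (\<Sum>n\<in>{1..N}. complex_of_real (p n) * cinner_vec (V *v \<psi> n) (X *v (V *v \<psi> n)))"
    for X V :: "complex^('o \<times> 'r)^('o \<times> 'r)"
  proof -
    have "trace (X ** (V ** rho ** adj V)) = trace ((adj V ** X ** V) ** rho)" by (rule conj_trace)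
    also have "\<dots> = (\<Sum>n\<in>{1..N}. complex_of_real (p n) * cinner_vec (\<psi> n) ((adj V ** X ** V) *v \<psi> n))"
      unfolding rho_eq by (rule trace_rho) simp
    finally show ?thesis by (simp add: cinner_conj)
  qed
  define P :: "complex^('o \<times> 'r)^('o \<times> 'r)" where "P = tensor_mat (ketbra (\<phi> 1) (\<phi> 1)) (mat 1)"
  define T :: "complex^('o \<times> 'r)^('o \<times> 'r)" where "T = tensor_mat (mat 1) HR"
  have pphi_form: "pphi V = (\<Sum>n\<in>{1..N}. complex_of_real (p n) * cinner_vec (V *v \<psi> n) (P *v (V *v \<psi> n)))" for V
    unfolding pphi_def pphi_trace P_def tr_gen by simp
  define c0 where "c0 = trace (HR ** gibbs \<beta> HR)"
  have dq_form: "DeltaQ V = (\<Sum>n\<in>{1..N}. complex_of_real (p n) * cinner_vec (V *v \<psi> n) (T *v (V *v \<psi> n))) - c0" for V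
    unfolding DeltaQ_def matrix_sub_ldistrib trace_sub dq_trace T_def tr_gen c0_def by simp
  define u where "u n = U *v \<psi> n" for n
  have U_adj: "adj U ** U = mat 1" "U ** adj U = mat 1" using U_unitary unfolding unitary_mat_def by auto
  have u_on: "cinner_vec (u n) (u n') = (if n = n' then 1 else 0)" if "n \<in> {1..N}" "n' \<in> {1..N}" for n n'
    unfolding u_def cinner_unitary[OF U_adj(1)] using psi_on that unfolding orthonormal_on_def by auto
  have cu: "cinner_vec (u n) (u n) = 1" if "n \<in> {1..N}" for n using u_on[OF that that] by simp
  have u_c: "complete_on {1..N} u" unfolding u_def by (rule complete_unitary[OF psi_c _ U_adj(2)]) simp
  have HR_xi: "HR *v \<xi> m = complex_of_real (lam m) *s \<xi> m" if "m \<in> {1..dR}" for m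
    unfolding HR_eq by (rule spec_apply[OF xi_onb _ that]) simp
  define blk where "blk n = (n - dR - 1) div (dO - 1) + 1" for n
  have blk_dec: "blk n \<in> {1..dR} \<and> (\<exists>l\<in>{1..dO - 1}. n = dR + (blk n - 1) * (dO - 1) + l)"
    if n: "n \<in> {1..N}" and nR: "\<not> n \<le> dR" for n
  proof -
    define q where "q = dO - 1"
    define j where "j = n - dR - 1"
    have dOq: "dO = q + 1" using dO1 by (simp add: q_def)
    have nle: "n \<le> dR * q + dR" using n by (simp add: N_def dOq algebra_simps)
    have q1: "q \<ge> 1"
    proof (rule ccontr)
      assume "\<not> q \<ge> 1" then have "q = 0" by simp
      then show False using nle nR by simp
    qed
    have jlt: "j < dR * q" using nle nR by (simp add: j_def)
    have jd: "j div q < dR" using less_mult_imp_div_less[OF jlt] .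
    have jm: "j mod q < q" using q1 by simp
    have "n = dR + (j div q) * q + (j mod q + 1)"
      using div_mult_mod_eq[of j q] nR by (simp add: j_def)
    then show ?thesis unfolding blk_def q_def[symmetric] j_def[symmetric]
      using jd jm by (intro conjI bexI[of _ "j mod q + 1"]) auto
  qed
  define t where "t n = (if n \<le> dR then lam n else lam (blk n))" for n
  define pi where "pi n = (if n \<le> dR then 1 else 0::real)" for n
  have eig: "T *v u n = complex_of_real (t n) *s u n \<and> P *v u n = complex_of_real (pi n) *s u n"
    if n: "n \<in> {1..N}" for n
  proof (cases "n \<le> dR")
    case True
    then have nR: "n \<in> {1..dR}" using n by auto
    have un: "u n = tensor_vec (\<phi> 1) (\<xi> n)" using U_i[OF nR] by (simp add: u_def)
    show ?thesis using True unfolding un T_def P_def t_def pi_def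
      by (simp add: tensor_mat_vec HR_xi[OF nR] tensor_vec_scale ketbra_vec phi1 phi1[simplified])
  next
    case False
    obtain l where l: "l \<in> {1..dO - 1}" and neq: "n = dR + (blk n - 1) * (dO - 1) + l"
      and bm: "blk n \<in> {1..dR}"
      using blk_dec[OF n False] by blast
    obtain \<chi>m :: "nat \<Rightarrow> complex^'o" where
      c2: "\<forall>l\<in>{1..dO - 1}. cinner_vec (\<phi> 1) (\<chi>m l) = 0" and
      c3: "\<forall>l\<in>{1..dO - 1}. U *v \<psi> (dR + (blk n - 1) * (dO - 1) + l) = tensor_vec (\<chi>m l) (\<xi> (blk n))"
      using U_ii[OF bm] by blast
    have un: "u n = tensor_vec (\<chi>m l) (\<xi> (blk n))" using c3 l neq unfolding u_def by metis
    have z: "cinner_vec (\<phi> 1) (\<chi>m l) = 0" using c2 l by blast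
    show ?thesis using False unfolding un T_def P_def t_def pi_def
      by (simp add: tensor_mat_vec HR_xi[OF bm] tensor_vec_scale ketbra_vec z z[simplified] tensor_vec_zero)
  qed
  have eigT: "T *v u n = complex_of_real (t n) *s u n" if "n \<in> {1..N}" for n using eig[OF that] by blast
  have eigP: "P *v u n = complex_of_real (pi n) *s u n" if "n \<in> {1..N}" for n using eig[OF that] by blast
  have pmax_pi: "(\<Sum>n\<in>{1..N}. p n * pi n) = pmax"
  proof -
    have "{1..N} \<inter> {n. n \<le> dR} = {1..dR}" using dRN by auto
    moreover have "p n * pi n = (if n \<le> dR then p n else 0)" for n by (simp add: pi_def)
    ultimately show ?thesis unfolding pmax_def by (simp add: sum.If_cases)
  qed
  have pU: "pphi U = complex_of_real pmax"
  proof -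
    have "pphi U = (\<Sum>n\<in>{1..N}. complex_of_real (p n) * cinner_vec (u n) (P *v u n))"
      unfolding pphi_form u_def ..
    also have "\<dots> = (\<Sum>n\<in>{1..N}. complex_of_real (p n * pi n))"
      by (intro sum.cong refl) (simp add: eigP cinner_scale_right cu)
    also have "\<dots> = complex_of_real pmax" unfolding pmax_pi[symmetric] of_real_sum ..
    finally show ?thesis .
  qed
  define M where "M = lam dR - lam 1"
  define s where "s n = t n - M * pi n" for n
  have smono: "s n \<le> s n'" if n: "n \<in> {1..N}" and n': "n' \<in> {1..N}" and nn: "n \<le> n'" for n n'
  proof -
    have R1: "1 \<in> {1..dR}" "dR \<in> {1..dR}" using dR1 by auto
    show ?thesis
    proof (cases "n' \<le> dR")
      case True
      then show ?thesis using n n' nn lam_mono[of n n'] by (simp add: s_def t_def pi_def)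
    next
      case F': False
      have b': "blk n' \<in> {1..dR}" using blk_dec[OF n' F'] by blast
      show ?thesis
      proof (cases "n \<le> dR")
        case True
        have "lam n \<le> lam dR" using lam_mono[of n dR] True n R1 by auto
        moreover have "lam 1 \<le> lam (blk n')" using lam_mono[of 1 "blk n'"] R1 b' by auto
        ultimately show ?thesis using True F' by (simp add: s_def t_def pi_def M_def)
      next
        case False
        have b: "blk n \<in> {1..dR}" using blk_dec[OF n False] by blast
        have "blk n \<le> blk n'" unfolding blk_def using nn by (simp add: div_le_mono diff_le_mono)
        then have "lam (blk n) \<le> lam (blk n')" using lam_mono b b' by blast
        then show ?thesis using False F' by (simp add: s_def t_def pi_def)
      qed
    qed
  qed
  have key: "Re (DeltaQ U) \<le> Re (DeltaQ V)" if V: "unitary_mat V" "pphi V = complex_of_real pmax" for V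
  proof -
    have V_adj: "adj V ** V = mat 1" "V ** adj V = mat 1" using V(1) unfolding unitary_mat_def by auto
    define v where "v n = V *v \<psi> n" for n
    have v_c: "complete_on {1..N} v" unfolding v_def by (rule complete_unitary[OF psi_c _ V_adj(2)]) simp
    have cv: "cinner_vec (v n) (v n) = 1" if "n \<in> {1..N}" for n
      unfolding v_def cinner_unitary[OF V_adj(1)] using psi_on that unfolding orthonormal_on_def by auto
    define D where "D n k = (cmod (cinner_vec (u k) (v n)))^2" for n k
    have expand: "cinner_vec (v n) (X *v v n) = complex_of_real (\<Sum>k\<in>{1..N}. w k * D n k)"
      if eX: "\<And>k. k \<in> {1..N} \<Longrightarrow> X *v u k = complex_of_real (w k) *s u k" for X w n
    proof -
      have "cinner_vec (v n) (X *v v n) = (\<Sum>k\<in>{1..N}. complex_of_real (w k) * cinner_vec (v n) (u k) * cinner_vec (u k) (v n))"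
        by (rule spectral_expand[OF u_c _ eX]) auto
      also have "\<dots> = (\<Sum>k\<in>{1..N}. complex_of_real (w k * D n k))"
        by (intro sum.cong refl) (simp add: D_def mult.assoc cinner_sq)
      finally show ?thesis by (simp add: of_real_sum)
    qed
    have Dnn: "0 \<le> D n k" for n k by (simp add: D_def)
    have row: "(\<Sum>k\<in>{1..N}. D n k) = 1" if "n \<in> {1..N}" for n
    proof -
      have "(\<Sum>k\<in>{1..N}. cinner_vec (v n) (u k) * cinner_vec (u k) (v n)) = 1"
        using parseval[OF u_c] cv[OF that] by simp
      then have "complex_of_real (\<Sum>k\<in>{1..N}. D n k) = 1"
        by (simp add: D_def cinner_sq)
      then show ?thesis by (metis of_real_eq_1_iff)
    qed
    have col: "(\<Sum>n\<in>{1..N}. D n k) = 1" if "k \<in> {1..N}" for k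
    proof -
      have "(\<Sum>n\<in>{1..N}. cinner_vec (u k) (v n) * cinner_vec (v n) (u k)) = 1"
        using parseval[OF v_c] cu[OF that] by simp
      then have "complex_of_real (\<Sum>n\<in>{1..N}. D n k) = 1"
        by (simp add: D_def cinner_sq')
      then show ?thesis by (metis of_real_eq_1_iff)
    qed
    have ET: "cinner_vec (v n) (T *v v n) = complex_of_real (\<Sum>k\<in>{1..N}. t k * D n k)" for n
      by (rule expand[OF eigT])
    have EP: "cinner_vec (v n) (P *v v n) = complex_of_real (\<Sum>k\<in>{1..N}. pi k * D n k)" for n
      by (rule expand[OF eigP])
    have ReDV: "Re (DeltaQ V) = (\<Sum>n\<in>{1..N}. p n * (\<Sum>k\<in>{1..N}. t k * D n k)) - Re c0"
    proof -
      have "DeltaQ V = (\<Sum>n\<in>{1..N}. complex_of_real (p n) * cinner_vec (v n) (T *v v n)) - c0"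
        unfolding dq_form v_def ..
      also have "\<dots> = complex_of_real (\<Sum>n\<in>{1..N}. p n * (\<Sum>k\<in>{1..N}. t k * D n k)) - c0"
        unfolding ET by (simp add: of_real_sum)
      finally show ?thesis by simp
    qed
    have RepV: "pmax = (\<Sum>n\<in>{1..N}. p n * (\<Sum>k\<in>{1..N}. pi k * D n k))"
    proof -
      have "complex_of_real pmax = (\<Sum>n\<in>{1..N}. complex_of_real (p n) * cinner_vec (v n) (P *v v n))"
        using V(2) unfolding pphi_form v_def by simp
      also have "\<dots> = complex_of_real (\<Sum>n\<in>{1..N}. p n * (\<Sum>k\<in>{1..N}. pi k * D n k))"
        unfolding EP by (simp add: of_real_sum)
      finally show ?thesis by (metis of_real_eq_iff)
    qed
    have ReDU: "Re (DeltaQ U) = (\<Sum>n\<in>{1..N}. p n * t n) - Re c0"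
    proof -
      have "DeltaQ U = (\<Sum>n\<in>{1..N}. complex_of_real (p n) * cinner_vec (u n) (T *v u n)) - c0"
        unfolding dq_form u_def ..
      also have "\<dots> = (\<Sum>n\<in>{1..N}. complex_of_real (p n * t n)) - c0"
        by (simp add: eigT cinner_scale_right cu)
      finally show ?thesis by (simp add: of_real_sum)
    qed
    have rearr: "(\<Sum>n\<in>{1..N}. p n * (\<Sum>k\<in>{1..N}. D n k * s k)) \<ge> (\<Sum>n\<in>{1..N}. p n * s n)"
    proof (rule rearrangement)
      show "\<And>n n'. n \<in> {1..N} \<Longrightarrow> n' \<in> {1..N} \<Longrightarrow> n \<le> n' \<Longrightarrow> p n' \<le> p n"
        using p_mono unfolding N_def by blast
      show "\<And>n n'. n \<in> {1..N} \<Longrightarrow> n' \<in> {1..N} \<Longrightarrow> n \<le> n' \<Longrightarrow> s n \<le> s n'"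
        by (rule smono)
      show "\<And>n k. n \<in> {1..N} \<Longrightarrow> k \<in> {1..N} \<Longrightarrow> 0 \<le> D n k" by (rule Dnn)
      show "\<And>n. n \<in> {1..N} \<Longrightarrow> (\<Sum>k\<in>{1..N}. D n k) = 1" by (rule row)
      show "\<And>k. k \<in> {1..N} \<Longrightarrow> (\<Sum>n\<in>{1..N}. D n k) = 1" by (rule col)
    qed
    have e1: "(\<Sum>n\<in>{1..N}. p n * (\<Sum>k\<in>{1..N}. D n k * s k))
       = (\<Sum>n\<in>{1..N}. p n * (\<Sum>k\<in>{1..N}. t k * D n k)) - M * (\<Sum>n\<in>{1..N}. p n * (\<Sum>k\<in>{1..N}. pi k * D n k))"
      by (simp add: s_def algebra_simps sum_subtractf sum_distrib_left)
    have e2: "(\<Sum>n\<in>{1..N}. p n * s n) = (\<Sum>n\<in>{1..N}. p n * t n) - M * (\<Sum>n\<in>{1..N}. p n * pi n)"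
      by (simp add: s_def algebra_simps sum_subtractf sum_distrib_left)
    show ?thesis using rearr unfolding e1 e2 ReDV ReDU RepV[symmetric] pmax_pi by simp
  qed
  show ?thesis using pU key by blast
qed


end
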